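(* Let $p\in(0,1)$ and let $\eta,c$ be positive numbers with $\eta\ge 4e^p/p$ and $c\le p\eta$. Then $$-c\,\Upsilon(1/c)+c\log f(2-\eta/c)<\max\{\eta(1-p)\log(1-p^3),\,-0.15p\eta\}-1.$$
   Context: $\Upsilon:(0,\infty)\to\mathbb{R}$ is defined by $\Upsilon(x)=x-1-\log x$ for $0<x\le1$ and $\Upsilon(x)=0$ for $x>1$. $f:(-\infty,1]\to\mathbb{R}$ is defined by $f(x)=(2-x)^{2-x}p(1-p)^{1-x}(1-x)^{x-1}$, with the convention $0^0=1$. $\log$ is natural. *)

theory Defs
  imports Complex_Main
begin

definition Upsilon :: "real \<Rightarrow> real" where
  "Upsilon x = (if x \<le> 1 then x - 1 - ln x else 0)"

text \<open>f_p(x) = (2-x)^(2-x) p (1-p)^(1-x) (1-x)^(x-1) for x <= 1, with 0^0 = 1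
  (the convention is only needed for the last factor at x = 1).\<close>
definition f :: "real \<Rightarrow> real \<Rightarrow> real" where
  "f p x = (2 - x) powr (2 - x) * p * (1 - p) powr (1 - x)
            * (if x = 1 then 1 else (1 - x) powr (x - 1))"

end

theory Submission
  imports Defs
begin


lemma ln_lower_rat:
  fixes z :: real assumes "0 \<le> z"
  shows "2 * z / (2 + z) \<le> ln (1 + z)"
proof -
  let ?g = "\<lambda>z::real. ln (1 + z) - 2 * z / (2 + z)"
  have d: "\<And>y::real. 0 \<le> y \<Longrightarrow> (?g has_real_derivative (1/(1+y) - 4/(2+y)^2)) (at y)"
  proof -
    fix y :: real assume "0 \<le> y"
    then show "(?g has_real_derivative (1/(1+y) - 4/(2+y)^2)) (at y)"
      by (auto intro!: derivative_eq_intros simp: field_simps power2_eq_square)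
  qed
  have nn: "\<And>y::real. 0 \<le> y \<Longrightarrow> 0 \<le> 1/(1+y) - 4/(2+y)^2"
  proof -
    fix y :: real assume y: "0 \<le> y"
    have "4 * (1 + y) \<le> (2+y)^2" by (simp add: power2_eq_square algebra_simps)
    then have "4/(2+y)^2 \<le> 1/(1+y)" using y by (simp add: field_simps)
    then show "0 \<le> 1/(1+y) - 4/(2+y)^2" by simp
  qed
  have "?g 0 \<le> ?g z"
    using assms
    by (intro DERIV_nonneg_imp_nondecreasing[of 0 z ?g]) (use d nn in blast)+
  then show ?thesis by simp
qed



lemma P1: fixes p :: real assumes "0 < p" "p \<le> 1/3"
  shows "1 + p/2 - p^2 \<le> 2*p/(2-p) + 2*(1-p^2)/(2+p+p^2)"
proof -
  have a: "0 < 2 - p" "0 < 2+p+p^2" using assms by (auto intro: add_pos_nonneg)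
  have e: "2*p*(2+p+p^2) + 2*(1-p^2)*(2-p) - (1 + p/2 - p^2) * ((2-p)*(2+p+p^2))
      = p^2 + 9/2*p^3 + 3/2*p^4 - p^5"
    by (simp add: eval_nat_numeral field_simps)
  have "p^5 \<le> p^4" using assms by (intro power_decreasing) auto
  moreover have "0 \<le> p^2" "0 \<le> p^3" "0 \<le> p^4" using assms by auto
  ultimately have "0 \<le> 2*p*(2+p+p^2) + 2*(1-p^2)*(2-p) - (1 + p/2 - p^2) * ((2-p)*(2+p+p^2))"
    unfolding e by linarith
  then have "(1 + p/2 - p^2) * ((2-p)*(2+p+p^2)) \<le> 2*p*(2+p+p^2) + 2*(1-p^2)*(2-p)" by simp
  moreover have "2*p/(2-p) + 2*(1-p^2)/(2+p+p^2) = (2*p*(2+p+p^2) + 2*(1-p^2)*(2-p)) / ((2-p)*(2+p+p^2))"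
    using a by (simp add: field_simps)
  moreover have "0 < (2-p)*(2+p+p^2)" using a by simp
  ultimately show ?thesis by (simp add: pos_le_divide_eq)
qed

lemma P2: fixes p :: real assumes "0 < p" "p \<le> 1/3"
  shows "1 < (1 + p/2 - p^2)^2 * (1-p) * (1+p+p^2/2)"
proof -
  have e: "(1 + p/2 - p^2)^2 * (1-p) * (1+p+p^2/2) - 1
     = p * (1 - 9/4*p - 2*p^2 + 11/8*p^3 + 11/8*p^4 - p^6/2)"
    by (simp add: eval_nat_numeral field_simps)
  have "p^6 \<le> p^4" using assms by (intro power_decreasing) auto
  moreover have "0 \<le> p^3" "0 \<le> p^4" using assms by auto
  moreover have "p^2 \<le> 1/9" using assms power_mono[of p "1/3" 2] by (simp add: power2_eq_square)
  ultimately have "0 < 1 - 9/4*p - 2*p^2 + 11/8*p^3 + 11/8*p^4 - p^6/2" using assms by linarith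
  with assms(1) have "0 < p * (1 - 9/4*p - 2*p^2 + 11/8*p^3 + 11/8*p^4 - p^6/2)" by simp
  with e show ?thesis by linarith
qed



lemma L_key:
  fixes Lq c :: real assumes "1 \<le> Lq" "0 < c"
  shows "(if 1 \<le> c then c - c*ln c else 1) + c*(1 + ln Lq - ln c) \<le> 2*sqrt Lq"
proof -
  define K where "K = sqrt Lq"
  have K: "0 < K" "ln Lq = 2 * ln K" using assms
    by (auto simp: K_def ln_sqrt)
  have k1: "ln K \<le> K - 1" using K ln_le_minus_one by blast
  show ?thesis
  proof (cases "1 \<le> c")
    case True
    have "ln (K/c) \<le> K/c - 1" using K assms ln_le_minus_one by simp
    then have "ln K - ln c \<le> K/c - 1" using K assms by (simp add: ln_div)
    then have "c*(ln K - ln c) \<le> c*(K/c - 1)" using assms by (intro mult_left_mono) auto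
    then have "c*ln K - c*ln c \<le> K - c" using assms by (simp add: algebra_simps)
    then show ?thesis using True K by (simp add: K_def[symmetric] algebra_simps)
  next
    case False
    have "ln (1/c) \<le> 1/c - 1" using assms ln_le_minus_one by simp
    then have "- ln c \<le> 1/c - 1" using assms by (simp add: ln_div)
    then have "c*(- ln c) \<le> c*(1/c - 1)" using assms by (intro mult_left_mono) auto
    then have h: "- c * ln c \<le> 1 - c" using assms by (simp add: algebra_simps)
    have "0 \<le> ln Lq" using assms by simp
    then have "c * ln Lq \<le> ln Lq" using False assms mult_right_mono[of c 1 "ln Lq"] by simp
    then show ?thesis using False h K k1 by (simp add: K_def[symmetric] algebra_simps)
  qed
qed

lemma L_ups:
  fixes c :: real assumes "0 < c"
  shows "- c * Upsilon (1/c) = (if 1 \<le> c then c - 1 - c * ln c else 0)"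
  using assms by (auto simp: Upsilon_def ln_div field_simps)

lemma L_tan:
  fixes u u0 :: real assumes "0 < u" "0 < u0"
  shows "u*ln u0 + u - u0 \<le> u * ln u"
proof -
  have "ln (u0/u) \<le> u0/u - 1" using assms ln_le_minus_one by simp
  then have "ln u0 - ln u \<le> u0/u - 1" using assms by (simp add: ln_div)
  then have "u*(ln u0 - ln u) \<le> u*(u0/u - 1)" using assms by (intro mult_left_mono) auto
  then show ?thesis using assms by (simp add: algebra_simps)
qed

lemma L_f:
  fixes p \<eta> c :: real assumes "0 < p" "p < 1" "0 < c" "c < \<eta>"
  shows "c * ln (f p (2 - \<eta>/c)) = \<eta>*(ln \<eta> - ln c) + c*ln p + (\<eta>-c)*ln(1-p) - (\<eta>-c)*(ln(\<eta>-c) - ln c)"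
proof -
  define t where "t = \<eta>/c"
  have t: "1 < t" "c * t = \<eta>" using assms by (auto simp: t_def field_simps)
  have x: "2 - t \<noteq> 1" using t by simp
  have ff: "f p (2 - t) = t powr t * p * (1-p) powr (t-1) * (t-1) powr (1-t)"
    using x by (simp add: f_def)
  have "ln (f p (2 - t)) = t * ln t + ln p + (t-1)*ln(1-p) + (1-t)*ln(t-1)"
    unfolding ff using t assms by (simp add: ln_mult ln_powr)
  moreover have "ln t = ln \<eta> - ln c" using assms by (simp add: t_def ln_div)
  moreover have "ln (t-1) = ln (\<eta>-c) - ln c"
  proof -
    have "t - 1 = (\<eta>-c)/c" using assms by (simp add: t_def field_simps)
    then show ?thesis using assms by (simp add: ln_div)
  qed
  ultimately have "ln (f p (2 - t)) = t*(ln \<eta> - ln c) + ln p + (t-1)*ln(1-p) + (1-t)*(ln (\<eta>-c) - ln c)"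
    by simp
  then have "c * ln (f p (2 - t)) = c * (t*(ln \<eta> - ln c) + ln p + (t-1)*ln(1-p) + (1-t)*(ln (\<eta>-c) - ln c))"
    by simp
  also have "\<dots> = (c*t)*(ln \<eta> - ln c) + c*ln p + (c*t-c)*ln(1-p) - (c*t-c)*(ln(\<eta>-c) - ln c)"
    by (simp add: algebra_simps)
  finally have "c * ln (f p (2 - t)) = (c*t)*(ln \<eta> - ln c) + c*ln p + (c*t-c)*ln(1-p) - (c*t-c)*(ln(\<eta>-c) - ln c)" .
  then show ?thesis using t by (simp add: t_def)
qed


theorem lemma8:
  fixes p \<eta> c :: real
  assumes "0 < p" "p < 1" "0 < \<eta>" "0 < c"
    and "\<eta> \<ge> 4 * exp p / p" and "c \<le> p * \<eta>"
  shows "- c * Upsilon (1 / c) + c * ln (f p (2 - \<eta> / c))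
         < max (\<eta> * (1 - p) * ln (1 - p ^ 3)) (- (15 / 100) * p * \<eta>) - 1"
proof -
  note pp = assms(1,2) and ep = assms(3) and cp = assms(4)
  define L where "L = p * \<eta>"
  have L0: "0 < L" using pp ep by (simp add: L_def)
  have "4 * exp p \<le> L" using assms(5) pp by (simp add: L_def field_simps)
  moreover have "1 + p + p^2/2 \<le> exp p" using pp exp_lower_Taylor_quadratic[of p] by simp
  ultimately have Lb0: "4 * (1 + p + p^2/2) \<le> L"
    by (meson dual_order.trans mult_le_cancel_left_pos zero_less_numeral)
  have Lb: "4 + 4*p + 2*p^2 \<le> L" using Lb0 by simp
  have Lb4: "1 + p + p^2/2 \<le> L/4" using Lb0 by simp
  have p2: "0 \<le> p^2" by simp
  have L4: "4 \<le> L" using Lb pp p2 by linarith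
  have clt: "c < \<eta>" using assms(6) pp ep by (smt (verit) mult_less_cancel_right2)
  have lnL: "ln L = ln p + ln \<eta>" using pp ep by (simp add: L_def ln_mult)
  define cf where "cf = c * ln (f p (2 - \<eta>/c))"
  have cfe: "cf = \<eta>*(ln \<eta> - ln c) + c*ln p + (\<eta>-c)*ln(1-p) - (\<eta>-c)*(ln(\<eta>-c) - ln c)"
    unfolding cf_def using L_f[OF pp cp clt] .
  define U where "U = (if 1 \<le> c then c - c*ln c else 1)"
  have lhs: "- c * Upsilon (1 / c) + c * ln (f p (2 - \<eta> / c)) = U + cf - 1"
    unfolding U_def cf_def using L_ups[OF cp] by simp
  have ec: "0 < \<eta> - c" using clt by simp
  show ?thesis
  proof (cases "1/3 \<le> p")
    case True
    have tan: "(\<eta>-c)*ln (\<eta>*(1-p)) + (\<eta>-c) - \<eta>*(1-p) \<le> (\<eta>-c)*ln(\<eta>-c)"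
      using L_tan[OF ec, of "\<eta>*(1-p)"] pp ep by simp
    have "ln (\<eta>*(1-p)) = ln \<eta> + ln (1-p)" using pp ep by (simp add: ln_mult)
    with tan have tan2: "(\<eta>-c)*ln \<eta> + (\<eta>-c)*ln(1-p) + (\<eta>-c) - \<eta>*(1-p) \<le> (\<eta>-c)*ln(\<eta>-c)"
      by (simp add: algebra_simps)
    have "cf \<le> c*(1 + (ln p + ln \<eta>) - ln c) - p*\<eta>"
      using tan2 unfolding cfe by (simp add: algebra_simps)
    then have "cf \<le> c*(1 + ln L - ln c) - L" unfolding lnL by (simp add: L_def)
    then have E: "U + cf \<le> 2*sqrt L - L"
      using L_key[of L c] L4 cp unfolding U_def by linarith
    have "1/9 \<le> p^2" using True power_mono[of "1/3" p 2] by (simp add: power2_eq_square)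
    with Lb True have L5: "50/9 \<le> L" by linarith
    have "L < (85/200 * L)^2"
    proof -
      have "(85/200 * L)^2 = L * (289/1600 * L)" by (simp add: power2_eq_square)
      moreover have "1 < 289/1600 * L" using L5 by linarith
      have "L * 1 < L * (289/1600 * L)" using L0 \<open>1 < 289/1600 * L\<close> by (intro mult_strict_left_mono) auto
      then show ?thesis using \<open>(85/200 * L)^2 = L * (289/1600 * L)\<close> by simp
    qed
    then have "sqrt L < sqrt ((85/200 * L)^2)" by (simp only: real_sqrt_less_iff)
    then have "sqrt L < 85/200 * L" using L0 by simp
    then have "U + cf < - (15/100) * p * \<eta>" using E by (simp add: L_def)
    then show ?thesis unfolding lhs by linarith
  next
    case False
    have p3: "p \<le> 1/3" using False by simp
    have q1: "0 < 1 - p" using pp by simp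
    define Lq where "Lq = L / (1-p)"
    have Lq1: "1 \<le> Lq" using L4 q1 pp by (simp add: Lq_def field_simps)
    have lnLq: "ln Lq = ln L - ln (1-p)" using L0 q1 by (simp add: Lq_def ln_div)
    have tan: "(\<eta>-c)*ln \<eta> + (\<eta>-c) - \<eta> \<le> (\<eta>-c)*ln(\<eta>-c)"
      using L_tan[OF ec ep] by simp
    have "cf \<le> c*(1 + (ln p + ln \<eta> - ln (1-p)) - ln c) + \<eta>*ln(1-p)"
      using tan unfolding cfe by (simp add: algebra_simps)
    then have "cf \<le> c*(1 + ln Lq - ln c) + \<eta>*ln(1-p)" unfolding lnLq lnL by simp
    then have E: "U + cf \<le> 2*sqrt Lq + \<eta>*ln(1-p)"
      using L_key[OF Lq1 cp] unfolding U_def by linarith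
    define q where "q = 1 + p/2 - p^2"
    have q0: "0 < q" using pp p3 power_mono[of p "1/3" 2] by (simp add: q_def power2_eq_square)
    have m1: "2*p/(2-p) \<le> - ln (1-p)"
    proof -
      have h1: "2*(p/(1-p))/(2 + p/(1-p)) \<le> ln (1 + p/(1-p))"
        using pp q1 by (intro ln_lower_rat) simp
      have e2: "2*(p/(1-p))/(2 + p/(1-p)) = 2*p/(2-p)"
      proof -
        have "2 + p/(1-p) = (2-p)/(1-p)" using q1 by (simp add: field_simps)
        moreover have "2 - p \<noteq> 0" "1 - p \<noteq> 0" using pp by auto
        ultimately show ?thesis by (simp add: divide_simps)
      qed
      have e3: "1 + p/(1-p) = 1/(1-p)" using q1 by (simp add: field_simps)
      have e4: "ln (1/(1-p)) = - ln (1-p)" using q1 by (simp add: ln_div)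
      show ?thesis using h1 unfolding e2 e3 e4 .
    qed
    have m2: "2*(p+p^2)/(2+(p+p^2)) \<le> ln (1 + (p+p^2))"
      using pp by (intro ln_lower_rat) simp
    have l3: "ln (1 - p^3) = ln (1-p) + ln (1 + (p+p^2))"
    proof -
      have "1 - p^3 = (1-p)*(1 + (p+p^2))" by (simp add: algebra_simps power2_eq_square power3_eq_cube)
      moreover have "0 < 1 + (p+p^2)" using pp by (simp add: add_pos_nonneg)
      ultimately show ?thesis using q1 by (simp add: ln_mult)
    qed
    define H where "H = (1-p)*ln(1-p^3) - ln(1-p)"
    have He: "H = p * (- ln (1-p)) + (1-p) * ln (1 + (p+p^2))" unfolding H_def l3 by (simp add: algebra_simps)
    have a1: "p * (2*p/(2-p)) \<le> p * (- ln (1-p))" using m1 pp by (intro mult_left_mono) auto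
    have a2: "(1-p) * (2*(p+p^2)/(2+(p+p^2))) \<le> (1-p) * ln (1 + (p+p^2))" using m2 q1 by (intro mult_left_mono) auto
    have a3: "(1-p) * (2*(p+p^2)/(2+(p+p^2))) = p * (2*(1-p^2)/(2+p+p^2))"
      by (simp add: field_simps power2_eq_square)
    have a4: "p * (2*p/(2-p) + 2*(1-p^2)/(2+p+p^2)) = p * (2*p/(2-p)) + p * (2*(1-p^2)/(2+p+p^2))"
      by (simp add: distrib_left)
    have "p * (2*p/(2-p) + 2*(1-p^2)/(2+p+p^2)) \<le> H" using a1 a2 a3 a4 He by linarith
    moreover have "p * q \<le> p * (2*p/(2-p) + 2*(1-p^2)/(2+p+p^2))"
      using P1[OF pp(1) p3] pp unfolding q_def by (intro mult_left_mono) auto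
    ultimately have Hq: "p * q \<le> H" by linarith
    have "\<eta> * (p*q) \<le> \<eta> * H" using Hq ep by (intro mult_left_mono) auto
    then have LqH: "L * q \<le> \<eta> * H" by (simp add: L_def algebra_simps)
    have "1 < q^2 * (1-p) * (1+p+p^2/2)" using P2[OF pp(1) p3] by (simp add: q_def)
    then have "L * 1 < L * (q^2 * (1-p) * (1+p+p^2/2))" using L0 by (intro mult_strict_left_mono) auto
    moreover have "L * (q^2 * (1-p) * (1+p+p^2/2)) \<le> L * (q^2 * (1-p) * (L/4))"
      using Lb4 L0 q1 by (intro mult_left_mono) auto
    ultimately have "L < L^2 * q^2 * (1-p) / 4" by (simp add: power2_eq_square algebra_simps)
    then have "Lq < (L * q / 2)^2" using q1 by (simp add: Lq_def field_simps power2_eq_square)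
    then have "sqrt Lq < sqrt ((L*q/2)^2)" by (simp only: real_sqrt_less_iff)
    then have "sqrt Lq < L*q/2" using L0 q0 by simp
    then have "U + cf < \<eta> * H + \<eta>*ln(1-p)" using E LqH by linarith
    then have "U + cf < \<eta> * (1 - p) * ln (1 - p ^ 3)" unfolding H_def by (simp add: algebra_simps)
    then show ?thesis unfolding lhs by linarith
  qed
qed

end
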